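(* Let $(X,\Sigma,\mu)$ be a complete $\sigma$-finite measure space, $\mathcal{A}\subseteq\Sigma$ a sub-$\sigma$-algebra with $\mu|_{\mathcal{A}}$ $\sigma$-finite, and $E=E^{\mathcal{A}}$ the conditional expectation. Write $X=B\cup\bigcup_{n\in\mathbb{N}}A_n$, where $\{A_n\}$ is a countable family of pairwise disjoint atoms and $B$ contains no atoms. Let $\Phi,\Psi,\Theta$ be Young functions vanishing only at zero and taking only finite values, such that $\Phi(xy)\le\Psi(x)+\Theta(y)$ for all $x,y\ge0$. If $u\in L^0(\Sigma)$ induces a bounded MCE operator $EM_u:L^{\Phi}(\Sigma)\to L^{\Psi}(\Sigma)$, then (i) $E(u)=0$ $\mu$-a.e. on $B$; (ii) $\sup_{n\in\mathbb{N}} E(u)(A_n)\,\Theta^{-1}\!\left(\frac{1}{\mu(A_n)}\right)<\infty$.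
   Context: A Young function is a convex, even function $\Phi:\mathbb{R}\to[0,\infty]$ with $\Phi(0)=0$, not identically $0$ nor identically $\infty$ on $(0,\infty)$. Its generalized inverse is $\Phi^{-1}(y)=\inf\{x\ge0:\Phi(x)>y\}$. $L^{\Phi}(\Sigma)$ is the Orlicz space of $\Sigma$-measurable $f$ with $\int_X\Phi(kf)\,d\mu<\infty$ for some $k>0$, normed by $\|f\|_\Phi=\inf\{k>0:\int_X\Phi(f/k)d\mu\le1\}$. $E^{\mathcal{A}}f$ is the unique $\mathcal{A}$-measurable function with $\int_A f=\int_A E^{\mathcal{A}}f$ for all $A\in\mathcal{A}$. The MCE operator is $EM_u(f)=E(uf)$. An atom is a set $A$ with $\mu(A)>0$ such that every measurable $F\subset A$ has $\mu(F)=0$ or $\mu(F)=\mu(A)$; a measurable function $g$ is a.e. constant on an atom $A$, with value denoted $g(A)$. *)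

theory Defs
  imports "HOL-Probability.Probability"
begin

text \<open>Young function (here: real-valued, since the theorem only concerns finite-valued ones).\<close>
definition young_function :: "(real \<Rightarrow> real) \<Rightarrow> bool" where
  "young_function \<Phi> \<longleftrightarrow> convex_on UNIV \<Phi> \<and> (\<forall>x. \<Phi> (- x) = \<Phi> x) \<and> \<Phi> 0 = 0
     \<and> (\<forall>x. 0 \<le> \<Phi> x) \<and> (\<exists>x>0. \<Phi> x \<noteq> 0)"

definition young_inv :: "(real \<Rightarrow> real) \<Rightarrow> real \<Rightarrow> real" where
  "young_inv \<Phi> y = Inf {x. 0 \<le> x \<and> \<Phi> x > y}"

definition orlicz_space :: "'a measure \<Rightarrow> (real \<Rightarrow> real) \<Rightarrow> ('a \<Rightarrow> real) set" where
  "orlicz_space M \<Phi> = {f \<in> borel_measurable M.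
      \<exists>k>0. (\<integral>\<^sup>+ x. ennreal (\<Phi> (k * f x)) \<partial>M) < \<infinity>}"

definition orlicz_norm :: "'a measure \<Rightarrow> (real \<Rightarrow> real) \<Rightarrow> ('a \<Rightarrow> real) \<Rightarrow> real" where
  "orlicz_norm M \<Phi> f = Inf {k. k > 0 \<and> (\<integral>\<^sup>+ x. ennreal (\<Phi> (f x / k)) \<partial>M) \<le> 1}"

text \<open>u induces a bounded MCE operator E M_u from L^Phi to L^Psi (E = conditional
  expectation w.r.t. the sub-sigma-algebra F): E(uf) is defined (E|uf| finite a.e.) for every
  f in L^Phi, lies in L^Psi, and the operator is bounded.\<close>
definition bounded_MCE :: "'a measure \<Rightarrow> 'a measure \<Rightarrow> ('a \<Rightarrow> real)
    \<Rightarrow> (real \<Rightarrow> real) \<Rightarrow> (real \<Rightarrow> real) \<Rightarrow> bool" where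
  "bounded_MCE M F u \<Phi> \<Psi> \<longleftrightarrow>
     (\<forall>f \<in> orlicz_space M \<Phi>.
        (AE x in M. nn_cond_exp M F (\<lambda>y. ennreal \<bar>u y * f y\<bar>) x < \<infinity>)
      \<and> real_cond_exp M F (\<lambda>y. u y * f y) \<in> orlicz_space M \<Psi>)
   \<and> (\<exists>C. \<forall>f \<in> orlicz_space M \<Phi>.
        orlicz_norm M \<Psi> (real_cond_exp M F (\<lambda>y. u y * f y)) \<le> C * orlicz_norm M \<Phi> f)"

definition is_atom :: "'a measure \<Rightarrow> 'a measure \<Rightarrow> 'a set \<Rightarrow> bool" where
  "is_atom M F A \<longleftrightarrow> A \<in> sets F \<and> emeasure M A > 0 \<and>
     (\<forall>C \<in> sets F. C \<subseteq> A \<longrightarrow> emeasure M C = 0 \<or> emeasure M C = emeasure M A)"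

definition atom_value :: "'a measure \<Rightarrow> ('a \<Rightarrow> real) \<Rightarrow> 'a set \<Rightarrow> real" where
  "atom_value M g A = (SOME c. AE x in M. x \<in> A \<longrightarrow> g x = c)"

end

theory Submission
  imports Defs
begin

lemma young_scale:
  assumes "young_function \<Phi>" "0 \<le> t" "t \<le> 1"
  shows "\<Phi> (t * z) \<le> t * \<Phi> z"
proof -
  have c: "convex_on UNIV \<Phi>" and z: "\<Phi> 0 = 0" using assms(1) unfolding young_function_def by auto
  have "\<Phi> ((1 - t) *\<^sub>R 0 + t *\<^sub>R z) \<le> (1 - t) * \<Phi> 0 + t * \<Phi> z"
    using convex_onD[OF c] assms(2,3) by blast
  then show ?thesis using z by simp
qed

lemma young_nonneg: "young_function \<Phi> \<Longrightarrow> 0 \<le> \<Phi> x"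
  unfolding young_function_def by auto

lemma young_zero: "young_function \<Phi> \<Longrightarrow> \<Phi> 0 = 0"
  unfolding young_function_def by auto

lemma young_abs: "young_function \<Phi> \<Longrightarrow> \<Phi> \<bar>x\<bar> = \<Phi> x"
  unfolding young_function_def by (cases "x \<ge> 0") auto

lemma young_mono:
  assumes "young_function \<Phi>" "0 \<le> a" "a \<le> b"
  shows "\<Phi> a \<le> \<Phi> b"
proof (cases "b = 0")
  case True then show ?thesis using assms by simp
next
  case False
  then have b: "b > 0" using assms by simp
  have "\<Phi> ((a/b) * b) \<le> (a/b) * \<Phi> b"
    by (rule young_scale[OF assms(1)]) (use assms b in auto)
  also have "\<dots> \<le> \<Phi> b"
  proof -
    have "a * \<Phi> b \<le> b * \<Phi> b" by (rule mult_right_mono) (use assms young_nonneg[OF assms(1), of b] in auto)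
    then have "a * \<Phi> b \<le> \<Phi> b * b" by (metis mult.commute)
    then show ?thesis using b by (simp add: divide_le_eq)
  qed
  finally show ?thesis using b by simp
qed

lemma young_unbounded:
  assumes "young_function \<Phi>"
  shows "\<exists>z>0. \<Phi> z > K"
proof -
  obtain x0 where x0: "x0 > 0" "\<Phi> x0 \<noteq> 0" using assms unfolding young_function_def by auto
  then have p: "\<Phi> x0 > 0" using young_nonneg[OF assms, of x0] by simp
  obtain n :: nat where n0: "real n > max 1 (K / \<Phi> x0)" using reals_Archimedean2 by blast
  then have n: "real n > K / \<Phi> x0" "n \<ge> 1" by auto
  have "\<Phi> ((1 / real n) * (real n * x0)) \<le> (1/ real n) * \<Phi> (real n * x0)"
    by (rule young_scale[OF assms]) (use n in auto)
  then have "\<Phi> x0 \<le> \<Phi> (real n * x0) / real n" using n by simp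
  then have "real n * \<Phi> x0 \<le> \<Phi> (real n * x0)" using n by (simp add: field_simps)
  moreover have "K < real n * \<Phi> x0" using n p by (simp add: field_simps)
  ultimately show ?thesis using x0 n by (intro exI[of _ "real n * x0"]) auto
qed

lemma young_borel:
  assumes "young_function \<Phi>"
  shows "\<Phi> \<in> borel_measurable borel"
proof -
  have "convex_on UNIV \<Phi>" using assms unfolding young_function_def by auto
  then have "continuous_on UNIV \<Phi>" by (intro convex_on_continuous) auto
  then show ?thesis by (rule borel_measurable_continuous_onI)
qed

lemma young_ind: "young_function \<Phi> \<Longrightarrow> \<Phi> (indicator S x / k) = \<Phi> (1/k) * indicator S x"
  by (cases "x \<in> S") (auto simp: young_zero)

lemma ind_integral:
  assumes "young_function \<Phi>" "S \<in> sets M"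
  shows "(\<integral>\<^sup>+ x. ennreal (\<Phi> (indicator S x / k)) \<partial>M) = ennreal (\<Phi> (1/k)) * emeasure M S"
proof -
  have "(\<integral>\<^sup>+ x. ennreal (\<Phi> (indicator S x / k)) \<partial>M) = (\<integral>\<^sup>+ x. ennreal (\<Phi> (1/k)) * indicator S x \<partial>M)"
    by (rule nn_integral_cong) (simp add: young_ind[OF assms(1)] young_zero[OF assms(1)] ennreal_mult'' indicator_def)
  also have "\<dots> = ennreal (\<Phi> (1/k)) * emeasure M S" by (rule nn_integral_cmult_indicator[OF assms(2)])
  finally show ?thesis .
qed

lemma ind_orlicz:
  assumes "young_function \<Phi>" "S \<in> sets M" "emeasure M S < \<infinity>"
  shows "indicator S \<in> orlicz_space M \<Phi>"
proof -
  have "(\<integral>\<^sup>+ x. ennreal (\<Phi> (1 * indicator S x)) \<partial>M) = ennreal (\<Phi> (1/1)) * emeasure M S"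
    using ind_integral[OF assms(1,2), of 1] by simp
  also have "\<dots> < \<infinity>" using assms(3) by (simp add: ennreal_mult_less_top)
  finally show ?thesis unfolding orlicz_space_def using assms(2)
    by (intro CollectI conjI exI[of _ 1]) auto
qed

lemma ind_norm_pos:
  assumes Y: "young_function \<Phi>" and S: "S \<in> sets M" "0 < emeasure M S" "emeasure M S < \<infinity>"
  shows "0 < orlicz_norm M \<Phi> (indicator S)"
proof -
  define m where "m = measure M S"
  have em: "emeasure M S = ennreal m" unfolding m_def using S by (simp add: emeasure_eq_ennreal_measure)
  have m: "m > 0" using S em by (simp add: m_def measure_nonneg zero_less_measure_iff)
  have adm: "\<Phi> (1/k) * m \<le> 1" if "(\<integral>\<^sup>+ x. ennreal (\<Phi> (indicator S x / k)) \<partial>M) \<le> 1" for k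
    using that ind_integral[OF Y S(1), of k] em m by (simp add: ennreal_mult''[symmetric])
  obtain z where z: "z > 0" "\<Phi> z > 1/m" using young_unbounded[OF Y] by blast
  have lb: "1/z \<le> k" if "k \<in> {k. k > 0 \<and> (\<integral>\<^sup>+ x. ennreal (\<Phi> (indicator S x / k)) \<partial>M) \<le> 1}" for k
  proof -
    from that have k: "k > 0" and "\<Phi> (1/k) * m \<le> 1" using adm by auto
    then have "\<Phi> (1/k) \<le> 1/m" using m by (simp add: field_simps)
    then have "1/k < z" using young_mono[OF Y, of z "1/k"] z by (metis linorder_not_le not_less order.strict_trans1 less_imp_le)
    then show ?thesis using k z by (simp add: field_simps)
  qed
  define k0 where "k0 = max 1 (\<Phi> 1 * m)"
  have k0: "k0 \<ge> 1" "k0 \<ge> \<Phi> 1 * m" unfolding k0_def by auto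
  have "\<Phi> ((1/k0) * 1) \<le> (1/k0) * \<Phi> 1" by (rule young_scale[OF Y]) (use k0 in auto)
  then have "\<Phi> (1/k0) \<le> \<Phi> 1 / k0" by simp
  then have "\<Phi> (1/k0) * m \<le> (\<Phi> 1 / k0) * m" by (rule mult_right_mono) (use m in auto)
  also have "\<dots> = (\<Phi> 1 * m) / k0" by simp
  also have "\<dots> \<le> 1" using k0 by (simp add: divide_le_eq)
  finally have "\<Phi> (1/k0) * m \<le> 1" .
  then have "k0 \<in> {k. k > 0 \<and> (\<integral>\<^sup>+ x. ennreal (\<Phi> (indicator S x / k)) \<partial>M) \<le> 1}"
    using ind_integral[OF Y S(1), of k0] em m k0 by (simp add: ennreal_mult''[symmetric])
  then have "1/z \<le> orlicz_norm M \<Phi> (indicator S)"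
    unfolding orlicz_norm_def by (intro cInf_greatest lb) auto
  then show ?thesis using z by (meson less_le_trans zero_less_divide_1_iff)
qed

lemma adm_nonempty:
  assumes Y: "young_function \<Psi>" and f: "f \<in> orlicz_space M \<Psi>"
  shows "\<exists>k. k > 0 \<and> (\<integral>\<^sup>+ x. ennreal (\<Psi> (f x / k)) \<partial>M) \<le> 1"
proof -
  from f obtain k where k: "k > 0" and fin: "(\<integral>\<^sup>+ x. ennreal (\<Psi> (k * f x)) \<partial>M) < \<infinity>"
    and fm: "f \<in> borel_measurable M"
    unfolding orlicz_space_def by auto
  have [measurable]: "\<Psi> \<in> borel_measurable borel" by (rule young_borel[OF Y])
  define I where "I = (\<integral>\<^sup>+ x. ennreal (\<Psi> (k * f x)) \<partial>M)"
  define r where "r = enn2real I"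
  have Ir: "I = ennreal r" "r \<ge> 0" using fin unfolding r_def I_def by (auto simp: less_top)
  define l where "l = 1 / (r + 1)"
  have l: "0 < l" "l \<le> 1" using Ir unfolding l_def by auto
  have "(\<integral>\<^sup>+ x. ennreal (\<Psi> (f x / (1 / (l * k)))) \<partial>M) \<le> (\<integral>\<^sup>+ x. ennreal l * ennreal (\<Psi> (k * f x)) \<partial>M)"
  proof (rule nn_integral_mono)
    fix x
    have "\<Psi> (l * (k * f x)) \<le> l * \<Psi> (k * f x)" by (rule young_scale[OF Y]) (use l in auto)
    then show "ennreal (\<Psi> (f x / (1 / (l * k)))) \<le> ennreal l * ennreal (\<Psi> (k * f x))"
      using l by (simp add: ennreal_mult''[symmetric] young_nonneg[OF Y] mult.assoc mult.commute mult.left_commute)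
  qed
  also have "\<dots> = ennreal l * I" unfolding I_def
    by (rule nn_integral_cmult) (use fm in measurable)
  also have "\<dots> = ennreal (l * r)" using Ir l by (simp add: ennreal_mult)
  also have "\<dots> \<le> 1" using Ir unfolding l_def by (simp add: divide_le_eq)
  finally show ?thesis using l k by (intro exI[of _ "1 / (l * k)"]) auto
qed

lemma core:
  fixes M :: "'a measure"
  assumes YP: "young_function \<Phi>" and YS: "young_function \<Psi>" and YT: "young_function \<Theta>"
    and ineq: "\<And>x y. 0 \<le> x \<Longrightarrow> 0 \<le> y \<Longrightarrow> \<Phi> (x * y) \<le> \<Psi> x + \<Theta> y"
    and S: "S \<in> sets M" "0 < emeasure M S" "emeasure M S < \<infinity>"
    and h: "h \<in> orlicz_space M \<Psi>"
    and hS: "AE x in M. x \<in> S \<longrightarrow> \<delta> \<le> \<bar>h x\<bar>" and d: "\<delta> > 0"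
    and y: "y > 0" "\<Theta> y \<le> 1 / measure M S"
    and nb: "orlicz_norm M \<Psi> h \<le> C * orlicz_norm M \<Phi> (indicator S)"
  shows "\<delta> * y \<le> 2 * C"
proof -
  define m where "m = measure M S"
  have em: "emeasure M S = ennreal m" unfolding m_def using S by (simp add: emeasure_eq_ennreal_measure)
  have m: "m > 0" using S em by (simp add: m_def measure_nonneg zero_less_measure_iff)
  define NP where "NP = orlicz_norm M \<Phi> (indicator S)"
  have NP: "NP > 0" unfolding NP_def by (rule ind_norm_pos[OF YP S])
  have key: "NP * (\<delta> * y / 2) \<le> k'"
    if k': "k' \<in> {k. k > 0 \<and> (\<integral>\<^sup>+ x. ennreal (\<Psi> (h x / k)) \<partial>M) \<le> 1}" for k'
  proof -
    from k' have k'p: "k' > 0" and int: "(\<integral>\<^sup>+ x. ennreal (\<Psi> (h x / k')) \<partial>M) \<le> 1" by auto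
    have "ennreal (\<Psi> (\<delta>/k')) * emeasure M S = (\<integral>\<^sup>+ x. ennreal (\<Psi> (\<delta>/k')) * indicator S x \<partial>M)"
      by (rule nn_integral_cmult_indicator[OF S(1), symmetric])
    also have "\<dots> \<le> (\<integral>\<^sup>+ x. ennreal (\<Psi> (h x / k')) \<partial>M)"
    proof (rule nn_integral_mono_AE)
      show "AE x in M. ennreal (\<Psi> (\<delta>/k')) * indicator S x \<le> ennreal (\<Psi> (h x / k'))"
        using hS
      proof eventually_elim
        case (elim x)
        show ?case
        proof (cases "x \<in> S")
          case True
          then have "\<delta> / k' \<le> \<bar>h x\<bar> / k'" using elim k'p by (simp add: divide_right_mono)
          then have "\<Psi> (\<delta>/k') \<le> \<Psi> (\<bar>h x\<bar> / k')" using d k'p by (intro young_mono[OF YS]) auto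
          also have "\<bar>h x\<bar> / k' = \<bar>h x / k'\<bar>" using k'p by simp
          also have "\<Psi> \<bar>h x / k'\<bar> = \<Psi> (h x / k')" by (rule young_abs[OF YS])
          finally show ?thesis using True by (simp add: ennreal_leI)
        qed simp
      qed
    qed
    also have "\<dots> \<le> 1" by (rule int)
    finally have "ennreal (\<Psi> (\<delta>/k') * m) \<le> 1" using em m by (simp add: ennreal_mult''[symmetric])
    then have Pm: "\<Psi> (\<delta>/k') * m \<le> 1" by simp
    define x where "x = \<delta> / k'"
    have x: "x \<ge> 0" using d k'p unfolding x_def by simp
    have "\<Psi> x \<le> 1/m" using Pm m unfolding x_def by (simp add: field_simps)
    moreover have "\<Theta> y \<le> 1/m" using y unfolding m_def by simp
    ultimately have "\<Phi> (x * y) \<le> 2/m" using ineq[OF x less_imp_le[OF y(1)]] by simp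
    moreover have "\<Phi> ((1/2) * (x * y)) \<le> (1/2) * \<Phi> (x * y)" by (rule young_scale[OF YP]) auto
    ultimately have P1: "\<Phi> ((1/2) * (x * y)) \<le> 1/m" by simp
    define k where "k = 2 * k' / (\<delta> * y)"
    have kp: "k > 0" unfolding k_def using k'p d y by simp
    have e: "1/k = (1/2) * (x * y)" unfolding k_def x_def using k'p d y by (simp add: field_simps)
    have "\<Phi> (1/k) \<le> 1/m" unfolding e by (rule P1)
    then have "\<Phi> (1/k) * m \<le> 1" using m by (simp add: field_simps)
    then have "(\<integral>\<^sup>+ x. ennreal (\<Phi> (indicator S x / k)) \<partial>M) \<le> 1"
      using ind_integral[OF YP S(1), of k] em m young_nonneg[OF YP] by (simp add: ennreal_mult''[symmetric])
    then have "NP \<le> k" unfolding NP_def orlicz_norm_def using kp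
      by (intro cInf_lower) (auto intro!: bdd_belowI[of _ 0])
    then have "NP * (\<delta> * y / 2) \<le> k * (\<delta> * y / 2)" using d y by (intro mult_right_mono) auto
    also have "\<dots> = k'" unfolding k_def using d y by simp
    finally show ?thesis .
  qed
  obtain k1 where "k1 > 0 \<and> (\<integral>\<^sup>+ x. ennreal (\<Psi> (h x / k1)) \<partial>M) \<le> 1"
    using adm_nonempty[OF YS h] by blast
  then have "NP * (\<delta> * y / 2) \<le> orlicz_norm M \<Psi> h"
    unfolding orlicz_norm_def by (intro cInf_greatest key) auto
  also have "\<dots> \<le> C * NP" using nb unfolding NP_def .
  finally have "NP * (\<delta> * y / 2) \<le> NP * C" by (simp add: mult.commute)
  then have "\<delta> * y / 2 \<le> C" using NP by simp
  then show ?thesis by simp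
qed

lemma ce_ind:
  assumes sf: "sigma_finite_subalgebra M F" and S: "S \<in> sets F" and u[measurable]: "u \<in> borel_measurable M"
  shows "AE x in M. real_cond_exp M F (\<lambda>y. u y * indicator S y) x = indicator S x * real_cond_exp M F u x"
proof -
  interpret sigma_finite_subalgebra M F by (rule sf)
  have iF: "(\<lambda>x. indicator S x :: ennreal) \<in> borel_measurable F" using S by measurable
  have e1: "(\<lambda>y. ennreal (u y * indicator S y)) = (\<lambda>x. indicator S x * ennreal (u x))"
    by (auto simp: indicator_def)
  have e2: "(\<lambda>y. ennreal (- (u y * indicator S y))) = (\<lambda>x. indicator S x * ennreal (- u x))"
    by (auto simp: indicator_def)
  have 1: "AE x in M. indicator S x * nn_cond_exp M F (\<lambda>x. ennreal (u x)) x = nn_cond_exp M F (\<lambda>x. indicator S x * ennreal (u x)) x"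
    by (rule nn_cond_exp_prod[OF iF]) measurable
  have 2: "AE x in M. indicator S x * nn_cond_exp M F (\<lambda>x. ennreal (- u x)) x = nn_cond_exp M F (\<lambda>x. indicator S x * ennreal (- u x)) x"
    by (rule nn_cond_exp_prod[OF iF]) measurable
  show ?thesis using 1 2
  proof eventually_elim
    case (elim x)
    show ?case unfolding real_cond_exp_def e1 e2 elim(1)[symmetric] elim(2)[symmetric]
      by (cases "x \<in> S") auto
  qed
qed

lemma atom_finite:
  assumes sf: "sigma_finite_subalgebra M F" and A: "is_atom M F A"
  shows "emeasure M A < \<infinity>"
proof -
  interpret sigma_finite_subalgebra M F by (rule sf)
  have sub: "subalgebra M F" by (rule subalg)
  obtain W where W: "countable W" "W \<subseteq> sets (restr_to_subalg M F)" "\<Union>W = space (restr_to_subalg M F)"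
      "\<forall>a\<in>W. emeasure (restr_to_subalg M F) a \<noteq> \<infinity>"
    using sigma_finite_measure.sigma_finite_countable[OF sigma_fin_subalg] by blast
  have WF: "W \<subseteq> sets F" using W(2) sets_restr_to_subalg[OF sub] by simp
  have Wfin: "\<forall>a\<in>W. emeasure M a \<noteq> \<infinity>"
  proof
    fix a assume a: "a \<in> W"
    then have "emeasure (restr_to_subalg M F) a = emeasure M a" using WF emeasure_restr_to_subalg[OF sub] by auto
    then show "emeasure M a \<noteq> \<infinity>" using W(4) a by metis
  qed
  have AF: "A \<in> sets F" and Ap: "emeasure M A > 0" using A unfolding is_atom_def by auto
  have FM: "sets F \<subseteq> sets M" using sub unfolding subalgebra_def by simp
  have AM: "A \<in> sets M" using AF FM by auto
  have Asp: "A \<subseteq> space M" using sets.sets_into_space[OF AM] .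
  have "\<exists>a\<in>W. emeasure M (A \<inter> a) \<noteq> 0"
  proof (rule ccontr)
    assume "\<not> ?thesis"
    then have "\<forall>a\<in>W. A \<inter> a \<in> null_sets M" using AM WF FM by (blast intro: null_setsI sets.Int)
    then have "(\<Union>a\<in>W. A \<inter> a) \<in> null_sets M" using W(1) by (intro null_sets_UN') auto
    moreover have "(\<Union>a\<in>W. A \<inter> a) = A" using W(3) Asp unfolding space_restr_to_subalg by auto
    ultimately show False using Ap by auto
  qed
  then obtain a where a: "a \<in> W" "emeasure M (A \<inter> a) \<noteq> 0" by blast
  have "A \<inter> a \<in> sets F" using a WF AF by auto
  then have "emeasure M (A \<inter> a) = emeasure M A" using A a unfolding is_atom_def by auto
  moreover have "emeasure M (A \<inter> a) \<le> emeasure M a" using a WF FM by (intro emeasure_mono) auto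
  ultimately show ?thesis using Wfin a by (metis infinity_ennreal_def leD less_top order.not_eq_order_implies_strict top.extremum_uniqueI)
qed

lemma atom_const:
  fixes g :: "'a \<Rightarrow> real"
  assumes sub: "subalgebra M F" and A: "is_atom M F A" and fin: "emeasure M A < \<infinity>"
    and g: "g \<in> borel_measurable F"
  shows "\<exists>c. AE x in M. x \<in> A \<longrightarrow> g x = c"
proof -
  have FM: "sets F \<subseteq> sets M" and spF: "space F = space M" using sub unfolding subalgebra_def by auto
  have AF: "A \<in> sets F" and Ap: "emeasure M A > 0"
    and dich: "\<And>C. C \<in> sets F \<Longrightarrow> C \<subseteq> A \<Longrightarrow> emeasure M C = 0 \<or> emeasure M C = emeasure M A"
    using A unfolding is_atom_def by auto
  have AM: "A \<in> sets M" using AF FM by auto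
  have Asp: "A \<subseteq> space M" using sets.sets_into_space[OF AM] .
  have EA: "emeasure M A = ennreal (measure M A)" using fin by (simp add: emeasure_eq_ennreal_measure)
  define L where "L r = A \<inter> {x\<in>space M. g x \<le> r}" for r
  have LF: "L r \<in> sets F" for r
  proof -
    have "{x\<in>space F. g x \<le> r} \<in> sets F" using g by measurable
    then show ?thesis unfolding L_def spF using AF by auto
  qed
  have LM: "L r \<in> sets M" for r using LF FM by auto
  have LA: "L r \<subseteq> A" for r unfolding L_def by auto
  have Ld: "emeasure M (L r) = 0 \<or> emeasure M (L r) = emeasure M A" for r using dich[OF LF LA] .
  have Lfin: "emeasure M (L r) \<noteq> \<infinity>" for r using emeasure_mono[OF LA AM, of r] fin by (auto simp: top_unique)
  have DL: "emeasure M (A - L r) = emeasure M A - emeasure M (L r)" for r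
    by (rule emeasure_Diff) (use LM AM LA Lfin in auto)
  define T where "T = {r. emeasure M (L r) = emeasure M A}"
  have Tup: "s \<in> T" if "r \<in> T" "r \<le> s" for r s
  proof -
    have "L r \<subseteq> L s" unfolding L_def using that by auto
    then have "emeasure M (L r) \<le> emeasure M (L s)" using LM by (intro emeasure_mono) auto
    moreover have "emeasure M (L s) \<le> emeasure M A" using LA LM AM by (intro emeasure_mono) auto
    ultimately show ?thesis using that unfolding T_def by auto
  qed
  have Tne: "T \<noteq> {}"
  proof
    assume e: "T = {}"
    then have "\<forall>n::nat. L (real n) \<in> null_sets M" using Ld LM unfolding T_def by (auto intro: null_setsI)
    then have "(\<Union>n. L (real n)) \<in> null_sets M" by auto
    moreover have "(\<Union>n. L (real n)) = A"
    proof
      show "A \<subseteq> (\<Union>n. L (real n))"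
      proof
        fix x assume "x \<in> A"
        obtain n :: nat where "g x \<le> real n" using real_arch_simple by blast
        then show "x \<in> (\<Union>n. L (real n))" using \<open>x \<in> A\<close> Asp unfolding L_def by auto
      qed
    qed (use LA in auto)
    ultimately show False using Ap by auto
  qed
  obtain N :: nat where N: "- real N \<notin> T"
  proof (rule ccontr)
    assume "\<not> thesis"
    then have allT: "\<forall>n::nat. - real n \<in> T" using that by blast
    have "\<forall>n::nat. A - L (- real n) \<in> null_sets M"
    proof
      fix n :: nat
      have "emeasure M (A - L (- real n)) = 0" using DL[of "- real n"] allT unfolding T_def by (simp add: EA ennreal_minus)
      then show "A - L (- real n) \<in> null_sets M" using AM LM by (auto intro: null_setsI)
    qed
    then have "(\<Union>n. A - L (- real n)) \<in> null_sets M" by (intro null_sets_UN) blast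
    moreover have "(\<Union>n. A - L (- real n)) = A"
    proof
      show "A \<subseteq> (\<Union>n. A - L (- real n))"
      proof
        fix x assume "x \<in> A"
        obtain n :: nat where "- g x < real n" using reals_Archimedean2 by blast
        then show "x \<in> (\<Union>n. A - L (- real n))" using \<open>x \<in> A\<close> unfolding L_def by (auto intro!: exI[of _ n])
      qed
    qed auto
    ultimately show False using Ap by auto
  qed
  have bdd: "bdd_below T"
  proof (rule bdd_belowI[of _ "- real N"])
    fix r assume "r \<in> T"
    show "- real N \<le> r"
    proof (rule ccontr)
      assume "\<not> - real N \<le> r"
      then have "- real N \<in> T" using Tup[OF \<open>r \<in> T\<close>] by auto
      then show False using N by simp
    qed
  qed
  define c where "c = Inf T"
  have n1: "A \<inter> {x\<in>space M. g x < c} \<in> null_sets M"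
  proof -
    have "\<forall>n::nat. L (c - 1 / Suc n) \<in> null_sets M"
    proof
      fix n :: nat
      have "c - 1 / Suc n \<notin> T"
      proof
        assume "c - 1 / Suc n \<in> T"
        then have "c \<le> c - 1 / Suc n" unfolding c_def using bdd by (intro cInf_lower)
        then show False by simp
      qed
      then show "L (c - 1 / Suc n) \<in> null_sets M" using Ld[of "c - 1 / Suc n"] LM unfolding T_def
        by (auto intro: null_setsI)
    qed
    then have U: "(\<Union>n. L (c - 1 / Suc n)) \<in> null_sets M" by (intro null_sets_UN) blast
    have "A \<inter> {x\<in>space M. g x < c} \<subseteq> (\<Union>n. L (c - 1 / Suc n))"
    proof
      fix x assume x: "x \<in> A \<inter> {x\<in>space M. g x < c}"
      then have "0 < c - g x" by auto
      then obtain n :: nat where "1 / Suc n < c - g x" using nat_approx_posE by blast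
      then show "x \<in> (\<Union>n. L (c - 1 / Suc n))" using x unfolding L_def by (auto intro!: exI[of _ n])
    qed
    moreover have "A \<inter> {x\<in>space M. g x < c} \<in> sets M"
    proof -
      have gM: "g \<in> borel_measurable M" using measurable_from_subalg[OF sub g] .
      have "{x\<in>space M. g x < c} \<in> sets M" using gM by measurable
      then show ?thesis using AM by auto
    qed
    ultimately show ?thesis using U null_sets_subset by blast
  qed
  have n2: "A \<inter> {x\<in>space M. g x > c} \<in> null_sets M"
  proof -
    have gM: "g \<in> borel_measurable M" using measurable_from_subalg[OF sub g] .
    have "\<forall>n::nat. A \<inter> {x\<in>space M. g x > c + 1 / Suc n} \<in> null_sets M"
    proof
      fix n :: nat
      have "Inf T < c + 1 / Suc n" unfolding c_def by simp
      then obtain r where r: "r \<in> T" "r < c + 1 / Suc n" using cInf_less_iff[OF Tne bdd] by blast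
      have "emeasure M (A - L r) = 0" using DL[of r] r(1) unfolding T_def by (simp add: EA ennreal_minus)
      then have "A - L r \<in> null_sets M" using AM LM by (auto intro: null_setsI)
      moreover have "A \<inter> {x\<in>space M. g x > c + 1 / Suc n} \<subseteq> A - L r" using r unfolding L_def by auto
      moreover have "A \<inter> {x\<in>space M. g x > c + 1 / Suc n} \<in> sets M"
      proof -
        have "{x\<in>space M. g x > c + 1 / Suc n} \<in> sets M" using gM by measurable
        then show ?thesis using AM by auto
      qed
      ultimately show "A \<inter> {x\<in>space M. g x > c + 1 / Suc n} \<in> null_sets M" using null_sets_subset by blast
    qed
    then have U: "(\<Union>n::nat. A \<inter> {x\<in>space M. g x > c + 1 / Suc n}) \<in> null_sets M" by (intro null_sets_UN) blast
    have "A \<inter> {x\<in>space M. g x > c} \<subseteq> (\<Union>n::nat. A \<inter> {x\<in>space M. g x > c + 1 / Suc n})"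
    proof
      fix x assume x: "x \<in> A \<inter> {x\<in>space M. g x > c}"
      then have "0 < g x - c" by auto
      then obtain n :: nat where "1 / Suc n < g x - c" using nat_approx_posE by blast
      then show "x \<in> (\<Union>n::nat. A \<inter> {x\<in>space M. g x > c + 1 / Suc n})" using x by (auto intro!: exI[of _ n])
    qed
    moreover have "A \<inter> {x\<in>space M. g x > c} \<in> sets M"
    proof -
      have "{x\<in>space M. g x > c} \<in> sets M" using gM by measurable
      then show ?thesis using AM by auto
    qed
    ultimately show ?thesis using U null_sets_subset by blast
  qed
  have "AE x in M. x \<in> A \<longrightarrow> g x = c"
  proof (rule AE_I')
    show "(A \<inter> {x\<in>space M. g x < c}) \<union> (A \<inter> {x\<in>space M. g x > c}) \<in> null_sets M" using n1 n2 by auto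
    show "{x \<in> space M. \<not> (x \<in> A \<longrightarrow> g x = c)} \<subseteq> (A \<inter> {x\<in>space M. g x < c}) \<union> (A \<inter> {x\<in>space M. g x > c})"
      by auto
  qed
  then show ?thesis by blast
qed

lemma small_subset:
  assumes sub: "subalgebra M F" and nonat: "\<not> (\<exists>C. C \<subseteq> B \<and> is_atom M F C)"
    and S0: "S0 \<in> sets F" "S0 \<subseteq> B" "0 < emeasure M S0" "emeasure M S0 < \<infinity>" and e: "\<epsilon> > 0"
  shows "\<exists>S\<in>sets F. S \<subseteq> S0 \<and> 0 < emeasure M S \<and> measure M S \<le> \<epsilon>"
proof -
  have FM: "sets F \<subseteq> sets M" using sub unfolding subalgebra_def by auto
  have fin: "emeasure M S \<noteq> \<infinity>" if "S \<in> sets F" "S \<subseteq> S0" for S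
    using emeasure_mono[of S S0 M] that S0 FM by (auto simp: top_unique)
  have em: "emeasure M S = ennreal (measure M S)" if "S \<in> sets F" "S \<subseteq> S0" for S
    using fin[OF that] by (simp add: emeasure_eq_ennreal_measure)
  have pos: "0 < emeasure M S \<longleftrightarrow> 0 < measure M S" if "S \<in> sets F" "S \<subseteq> S0" for S
    using em[OF that] by simp
  have step: "\<exists>S'\<in>sets F. S' \<subseteq> S \<and> 0 < measure M S' \<and> measure M S' \<le> measure M S / 2"
    if S: "S \<in> sets F" "S \<subseteq> S0" "0 < measure M S" for S
  proof -
    have "\<not> is_atom M F S" using nonat S S0(2) by blast
    then obtain D where D: "D \<in> sets F" "D \<subseteq> S" "emeasure M D \<noteq> 0" "emeasure M D \<noteq> emeasure M S"
      using S pos[OF S(1,2)] unfolding is_atom_def by auto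
    have D0: "D \<subseteq> S0" using D S by auto
    have dpos: "0 < measure M D" using D(3) em[OF D(1) D0] by (simp add: zero_less_measure_iff)
    have dne: "measure M D \<noteq> measure M S" using D(4) em[OF D(1) D0] em[OF S(1,2)] by auto
    have dle: "measure M D \<le> measure M S"
      using emeasure_mono[of D S M] D S FM em[OF D(1) D0] em[OF S(1,2)] by auto
    have diff: "measure M (S - D) = measure M S - measure M D"
      using fin[OF S(1,2)] S D FM by (intro measure_Diff) auto
    show ?thesis
    proof (cases "measure M D \<le> measure M S / 2")
      case True then show ?thesis using D dpos by auto
    next
      case False
      have "S - D \<in> sets F" using S D by auto
      then show ?thesis using False diff dle dne by (intro bexI[of _ "S - D"]) auto
    qed
  qed
  have it: "\<exists>S\<in>sets F. S \<subseteq> S0 \<and> 0 < measure M S \<and> measure M S \<le> measure M S0 / 2^n" for n :: nat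
  proof (induction n)
    case 0 then show ?case using S0 pos[OF S0(1)] by (intro bexI[of _ S0]) auto
  next
    case (Suc n)
    then obtain S where S: "S \<in> sets F" "S \<subseteq> S0" "0 < measure M S" "measure M S \<le> measure M S0 / 2^n" by blast
    obtain S' where S': "S' \<in> sets F" "S' \<subseteq> S" "0 < measure M S'" "measure M S' \<le> measure M S / 2"
      using step[OF S(1-3)] by blast
    have "measure M S' \<le> measure M S0 / 2^Suc n" using S'(4) S(4) by simp
    then show ?case using S S' by (intro bexI[of _ S']) auto
  qed
  obtain n :: nat where n: "measure M S0 / \<epsilon> < 2^n" using real_arch_pow[of 2] by auto
  then have "measure M S0 / 2^n \<le> \<epsilon>" using e by (simp add: field_simps)
  then obtain S where "S \<in> sets F" "S \<subseteq> S0" "0 < measure M S" "measure M S \<le> \<epsilon>" using it[of n] by force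
  then show ?thesis using pos by blast
qed

lemma sf_cover:
  assumes sf: "sigma_finite_subalgebra M F"
  obtains W where "countable W" "W \<subseteq> sets F" "\<Union>W = space M" "\<forall>a\<in>W. emeasure M a \<noteq> \<infinity>"
proof -
  interpret sigma_finite_subalgebra M F by (rule sf)
  have sub: "subalgebra M F" by (rule subalg)
  obtain W where W: "countable W" "W \<subseteq> sets (restr_to_subalg M F)" "\<Union>W = space (restr_to_subalg M F)"
      "\<forall>a\<in>W. emeasure (restr_to_subalg M F) a \<noteq> \<infinity>"
    using sigma_finite_measure.sigma_finite_countable[OF sigma_fin_subalg] by blast
  have WF: "W \<subseteq> sets F" using W(2) sets_restr_to_subalg[OF sub] by simp
  have Wfin: "\<forall>a\<in>W. emeasure M a \<noteq> \<infinity>"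
  proof
    fix a assume a: "a \<in> W"
    then have "emeasure (restr_to_subalg M F) a = emeasure M a" using WF emeasure_restr_to_subalg[OF sub] by auto
    then show "emeasure M a \<noteq> \<infinity>" using W(4) a by metis
  qed
  show ?thesis using that W(1) WF W(3) Wfin unfolding space_restr_to_subalg by blast
qed

theorem theorem3p3:
  fixes M F :: "'a measure" and u :: "'a \<Rightarrow> real"
    and \<Phi> \<Psi> \<Theta> :: "real \<Rightarrow> real"
    and B :: "'a set" and I :: "nat set" and A :: "nat \<Rightarrow> 'a set"
  assumes complete: "complete_measure M"
    and sfin: "sigma_finite_measure M"
    and subalg: "sigma_finite_subalgebra M F"
    and atoms: "\<And>n. n \<in> I \<Longrightarrow> is_atom M F (A n)"
    and disj: "disjoint_family_on A I"
    and B_sets: "B \<in> sets F"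
    and decomp: "space M = B \<union> (\<Union>n\<in>I. A n)"
    and B_nonatomic: "\<not> (\<exists>C. C \<subseteq> B \<and> is_atom M F C)"
    and young: "young_function \<Phi>" "young_function \<Psi>" "young_function \<Theta>"
    and zero_only: "\<And>x. \<Phi> x = 0 \<longleftrightarrow> x = 0" "\<And>x. \<Psi> x = 0 \<longleftrightarrow> x = 0"
                   "\<And>x. \<Theta> x = 0 \<longleftrightarrow> x = 0"
    and ineq: "\<And>x y. 0 \<le> x \<Longrightarrow> 0 \<le> y \<Longrightarrow> \<Phi> (x * y) \<le> \<Psi> x + \<Theta> y"
    and u_meas: "u \<in> borel_measurable M"
    and bdd: "bounded_MCE M F u \<Phi> \<Psi>"
  shows "(AE x in M. x \<in> B \<longrightarrow> real_cond_exp M F u x = 0)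
    \<and> bdd_above ((\<lambda>n. atom_value M (real_cond_exp M F u) (A n)
                      * young_inv \<Theta> (1 / measure M (A n))) ` I)"
proof -
  have sfs: "sigma_finite_subalgebra M F" by (rule subalg)
  interpret sigma_finite_subalgebra M F by (rule sfs)
  have sub: "subalgebra M F" by (rule subalg)
  have FM: "sets F \<subseteq> sets M" and spF: "space F = space M" using sub unfolding subalgebra_def by auto
  obtain C where Cb: "\<And>f. f \<in> orlicz_space M \<Phi> \<Longrightarrow>
        orlicz_norm M \<Psi> (real_cond_exp M F (\<lambda>y. u y * f y)) \<le> C * orlicz_norm M \<Phi> f"
    using bdd unfolding bounded_MCE_def by blast
  have memb: "\<And>f. f \<in> orlicz_space M \<Phi> \<Longrightarrow> real_cond_exp M F (\<lambda>y. u y * f y) \<in> orlicz_space M \<Psi>"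
    using bdd unfolding bounded_MCE_def by blast
  define g where "g = real_cond_exp M F u"
  have gF: "g \<in> borel_measurable F" unfolding g_def by simp
  have gM: "g \<in> borel_measurable M" unfolding g_def by simp
  have G: "\<delta> * y \<le> 2 * C"
    if S: "S \<in> sets F" "0 < emeasure M S" "emeasure M S < \<infinity>" and d: "\<delta> > 0" and y: "y > 0"
      "\<Theta> y \<le> 1 / measure M S" and hS: "AE x in M. x \<in> S \<longrightarrow> \<delta> \<le> \<bar>g x\<bar>" for S \<delta> y
  proof -
    have SM: "S \<in> sets M" using S FM by auto
    have fo: "indicator S \<in> orlicz_space M \<Phi>" by (rule ind_orlicz[OF young(1) SM S(3)])
    have ce: "AE x in M. real_cond_exp M F (\<lambda>y. u y * indicator S y) x = indicator S x * g x"
      unfolding g_def by (rule ce_ind[OF sfs S(1) u_meas])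
    have hS': "AE x in M. x \<in> S \<longrightarrow> \<delta> \<le> \<bar>real_cond_exp M F (\<lambda>y. u y * indicator S y) x\<bar>"
      using ce hS by eventually_elim auto
    show ?thesis
      by (rule core[OF young ineq SM S(2,3) memb[OF fo] hS' d y Cb[OF fo]])
  qed
  have part1: "AE x in M. x \<in> B \<longrightarrow> g x = 0"
  proof (rule ccontr)
    assume nAE: "\<not> (AE x in M. x \<in> B \<longrightarrow> g x = 0)"
    obtain W where W: "countable W" "W \<subseteq> sets F" "\<Union>W = space M" "\<forall>a\<in>W. emeasure M a \<noteq> \<infinity>"
      using sf_cover[OF sfs] by blast
    define Q where "Q n a = {x\<in>space M. x \<in> B \<and> 1 / Suc n \<le> \<bar>g x\<bar>} \<inter> a" for n :: nat and a
    have QF: "Q n a \<in> sets F" if "a \<in> W" for n a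
    proof -
      have "{x\<in>space F. x \<in> B \<and> 1 / Suc n \<le> \<bar>g x\<bar>} \<in> sets F" using gF B_sets by measurable
      then show ?thesis unfolding Q_def spF using that W(2) by auto
    qed
    have "\<exists>n a. a \<in> W \<and> emeasure M (Q n a) \<noteq> 0"
    proof (rule ccontr)
      assume "\<not> ?thesis"
      then have "\<And>n a. a \<in> W \<Longrightarrow> Q n a \<in> null_sets M" using QF FM by (blast intro: null_setsI)
      then have "\<And>n. (\<Union>a\<in>W. Q n a) \<in> null_sets M" using W(1) by (intro null_sets_UN') auto
      then have U: "(\<Union>n. \<Union>a\<in>W. Q n a) \<in> null_sets M" by (intro null_sets_UN) blast
      have "{x\<in>space M. \<not> (x \<in> B \<longrightarrow> g x = 0)} \<subseteq> (\<Union>n. \<Union>a\<in>W. Q n a)"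
      proof
        fix x assume x: "x \<in> {x\<in>space M. \<not> (x \<in> B \<longrightarrow> g x = 0)}"
        then have "0 < \<bar>g x\<bar>" by auto
        then obtain n :: nat where n: "1 / Suc n < \<bar>g x\<bar>" using nat_approx_posE by blast
        obtain a where "a \<in> W" "x \<in> a" using x W(3) by auto
        then show "x \<in> (\<Union>n. \<Union>a\<in>W. Q n a)" using x n unfolding Q_def by (auto intro!: exI[of _ n])
      qed
      then have "AE x in M. x \<in> B \<longrightarrow> g x = 0" by (rule AE_I'[OF U])
      then show False using nAE by simp
    qed
    then obtain n a where a: "a \<in> W" "emeasure M (Q n a) \<noteq> 0" by blast
    define \<delta> where "\<delta> = 1 / real (Suc n)"
    have dp: "\<delta> > 0" unfolding \<delta>_def by simp
    have S0F: "Q n a \<in> sets F" using QF[OF a(1)] .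
    have S0B: "Q n a \<subseteq> B" unfolding Q_def by auto
    have S0fin: "emeasure M (Q n a) < \<infinity>"
    proof -
      have "emeasure M (Q n a) \<le> emeasure M a" using a W(2) FM by (intro emeasure_mono) (auto simp: Q_def)
      moreover have "emeasure M a < \<infinity>" using W(4) a(1) by (simp add: less_top)
      ultimately show ?thesis by (rule le_less_trans)
    qed
    have S0pos: "0 < emeasure M (Q n a)" using a(2) by (simp add: zero_less_iff_neq_zero)
    define Y0 where "Y0 = max 0 (2 * C / \<delta>) + 1"
    have Y0: "Y0 > 0" unfolding Y0_def by simp
    have TY: "\<Theta> Y0 > 0" using zero_only(3)[of Y0] young_nonneg[OF young(3), of Y0] Y0 by auto
    obtain S where S: "S \<in> sets F" "S \<subseteq> Q n a" "0 < emeasure M S" "measure M S \<le> 1 / \<Theta> Y0"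
      using small_subset[OF sub B_nonatomic S0F S0B S0pos S0fin, of "1 / \<Theta> Y0"] TY by auto
    have Sfin: "emeasure M S < \<infinity>"
      using emeasure_mono[of S "Q n a" M] S S0F FM S0fin by (auto)
    have mpos: "0 < measure M S" using S(3) Sfin by (simp add: emeasure_eq_ennreal_measure less_top)
    have "\<Theta> Y0 \<le> 1 / measure M S" using S(4) mpos TY by (simp add: field_simps)
    moreover have "AE x in M. x \<in> S \<longrightarrow> \<delta> \<le> \<bar>g x\<bar>" using S(2) unfolding Q_def \<delta>_def by auto
    ultimately have "\<delta> * Y0 \<le> 2 * C" using G[OF S(1,3) Sfin dp Y0] by blast
    moreover have "\<delta> * Y0 > 2 * C"
    proof -
      have "\<delta> * Y0 \<ge> \<delta> * (2 * C / \<delta> + 1)" unfolding Y0_def using dp by (intro mult_left_mono) auto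
      also have "\<delta> * (2 * C / \<delta> + 1) = 2 * C + \<delta>" using dp by (simp add: field_simps)
      finally show ?thesis using dp by simp
    qed
    ultimately show False by simp
  qed
  have part2: "atom_value M g (A n) * young_inv \<Theta> (1 / measure M (A n)) \<le> max 0 (2 * C)"
    if n: "n \<in> I" for n
  proof -
    have at: "is_atom M F (A n)" using atoms n .
    have AF: "A n \<in> sets F" and Ap: "0 < emeasure M (A n)" using at unfolding is_atom_def by auto
    have fin: "emeasure M (A n) < \<infinity>" by (rule atom_finite[OF sfs at])
    have "\<exists>c. AE x in M. x \<in> A n \<longrightarrow> g x = c" by (rule atom_const[OF sub at fin gF])
    then have cv: "AE x in M. x \<in> A n \<longrightarrow> g x = atom_value M g (A n)"
      unfolding atom_value_def by (rule someI_ex)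
    define c where "c = atom_value M g (A n)"
    define t where "t = 1 / measure M (A n)"
    define Y where "Y = young_inv \<Theta> t"
    have Yset: "Y = Inf {x. 0 \<le> x \<and> \<Theta> x > t}" unfolding Y_def young_inv_def ..
    obtain z where z: "z > 0" "\<Theta> z > t" using young_unbounded[OF young(3)] by blast
    have ne: "{x. 0 \<le> x \<and> \<Theta> x > t} \<noteq> {}" using z by (auto intro!: exI[of _ z])
    have bb: "bdd_below {x. 0 \<le> x \<and> \<Theta> x > t}" by (rule bdd_belowI[of _ 0]) auto
    have Y0: "0 \<le> Y" unfolding Yset using ne by (intro cInf_greatest) auto
    show ?thesis
    proof (cases "c \<le> 0")
      case True
      then have "c * Y \<le> 0" using Y0 by (simp add: mult_nonpos_nonneg)
      then show ?thesis unfolding c_def Y_def t_def by simp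
    next
      case False
      then have cp: "c > 0" by simp
      show ?thesis
      proof (cases "Y = 0")
        case True
        then show ?thesis unfolding c_def Y_def t_def by simp
      next
        case False
        then have Ypos: "0 < Y" using Y0 by simp
        have "Y \<le> 2 * C / c"
        proof (rule dense_le_bounded[OF Ypos])
          fix w assume w: "0 < w" "w < Y"
          have "\<Theta> w \<le> t"
          proof (rule ccontr)
            assume "\<not> \<Theta> w \<le> t"
            then have "w \<in> {x. 0 \<le> x \<and> \<Theta> x > t}" using w by auto
            then have "Y \<le> w" unfolding Yset using bb by (intro cInf_lower)
            then show False using w by simp
          qed
          moreover have "AE x in M. x \<in> A n \<longrightarrow> c \<le> \<bar>g x\<bar>" using cv cp unfolding c_def by eventually_elim auto
          ultimately have "c * w \<le> 2 * C" using G[OF AF Ap fin cp w(1)] unfolding t_def by blast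
          then show "w \<le> 2 * C / c" using cp by (simp add: field_simps)
        qed
        then have "c * Y \<le> 2 * C" using cp by (simp add: field_simps)
        then show ?thesis unfolding c_def Y_def t_def by simp
      qed
    qed
  qed
  show ?thesis
  proof
    show "AE x in M. x \<in> B \<longrightarrow> real_cond_exp M F u x = 0" using part1 unfolding g_def .
    show "bdd_above ((\<lambda>n. atom_value M (real_cond_exp M F u) (A n) * young_inv \<Theta> (1 / measure M (A n))) ` I)"
      using part2 unfolding g_def by (intro bdd_aboveI2) blast
  qed
qed

end
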